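(* Let $\alpha>0$, $0<R_1<R_2$, $\lambda_G>0$, and let $g=|h|^2d^{-\alpha}$ where $|h|^2$ is exponential with mean $\lambda_G$ and $d$ is independent of $|h|^2$. Put $b_3=\frac{2}{\alpha}+1$, $b_{1,1}^G=\frac{2\lambda_G^{2/\alpha}}{\alpha R_1^2}$, $b_{1,2}^G=\frac{2\lambda_G^{2/\alpha}}{\alpha(R_2^2-R_1^2)}$, $b_{2,1}^G=\frac{R_1^\alpha}{\lambda_G}$, $b_{2,2}^G=\frac{R_2^\alpha}{\lambda_G}$. (i) If $d$ is the distance to the origin of a point uniformly distributed in the disc of radius $R_1$ centred at the origin, then for $x\ge 0$ the CDF of $g$ is $$F^{near}_{g}(x)=\frac{b_{1,1}^G\left(b_{2,1}^G\right)^{b_3}}{b_3}\,x\,{}_2F_2\!\left(b_3,1;b_3+1,2;-b_{2,1}^Gx\right).$$ (ii) If $d$ is the distance to the origin of a point uniformly distributed in the annulus $R_1\le|z|\le R_2$, then for $x\ge0$ $$F^{far}_{g}(x)=\frac{b_{1,2}^G\left(b_{2,2}^G\right)^{b_3}}{b_3}\,x\,{}_2F_2\!\left(b_3,1;b_3+1,2;-b_{2,2}^Gx\right)-\frac{b_{1,2}^G\left(b_{2,1}^G\right)^{b_3}}{b_3}\,x\,{}_2F_2\!\left(b_3,1;b_3+1,2;-b_{2,1}^Gx\right).$$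
   Context: ${}_pF_q$ denotes the generalized hypergeometric function. The random variable $g$ is the combined channel gain (Rayleigh fading with path loss exponent $\alpha$) of a user located uniformly in a disc (near user) or annulus (far user) around a base station at the origin. *)

theory Defs
  imports "HOL-Probability.Probability"
begin

definition hypergeom :: "real list \<Rightarrow> real list \<Rightarrow> real \<Rightarrow> real" where
  "hypergeom as bs z =
     (\<Sum>k. (prod_list (map (\<lambda>a. pochhammer a k) as) / prod_list (map (\<lambda>b. pochhammer b k) bs))
          * z ^ k / fact k)"

definition gain :: "real \<Rightarrow> ('a \<Rightarrow> real) \<Rightarrow> ('a \<Rightarrow> complex) \<Rightarrow> 'a \<Rightarrow> real" where
  "gain \<alpha> H Z \<omega> = H \<omega> * (cmod (Z \<omega>)) powr (- \<alpha>)"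

text \<open>Standing model: |h|^2 exponential with mean lambda (rate 1/lambda), Z uniform on region A
  of the plane (identified with complex numbers), H and Z independent.\<close>
definition fading_model :: "'a measure \<Rightarrow> real \<Rightarrow> ('a \<Rightarrow> real) \<Rightarrow> ('a \<Rightarrow> complex) \<Rightarrow> complex set \<Rightarrow> bool" where
  "fading_model M lam H Z A \<longleftrightarrow>
     prob_space M \<and>
     distributed M lborel H (exponential_density (1 / lam)) \<and>
     Z \<in> borel_measurable M \<and>
     distr M lborel Z = uniform_measure lborel A \<and>
     prob_space.indep_var M borel H borel Z"

end

theory Submission
  imports Defs
begin

lemma term_int:
  fixes c \<beta> :: real and n :: nat
  assumes "c > 0" "\<beta> > 0"
  shows "((\<lambda>h. h powr n - h powr (n + \<beta>) / c powr \<beta>) has_integral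
           (c ^ (n+1) / (n+1) - c ^ (n+1) / (n + 1 + \<beta>))) {0..c}"
proof -
  have 1: "((\<lambda>h. h powr n) has_integral (c powr (n+1) / (n+1))) {0..c}"
    using has_integral_powr_from_0[of "real n" c] assms by (simp add: add.commute)
  have 2: "((\<lambda>h. h powr (n + \<beta>)) has_integral (c powr (n+\<beta>+1) / (n+\<beta>+1))) {0..c}"
    using has_integral_powr_from_0[of "real n + \<beta>" c] assms by (simp add: add.commute add.left_commute)
  have 3: "((\<lambda>h. h powr (n + \<beta>) / c powr \<beta>) has_integral (c powr (n+\<beta>+1) / (n+\<beta>+1) / c powr \<beta>)) {0..c}"
    using has_integral_divide[OF 2] by simp
  have e1: "c powr (n+1) = c ^ (n+1)"
    using assms by (metis of_nat_1 of_nat_add powr_realpow)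
  have e2: "c powr (n+\<beta>+1) / (n+\<beta>+1) / c powr \<beta> = c ^ (n+1) / (n + 1 + \<beta>)"
  proof -
    have "c powr (n+\<beta>+1) = c powr (n+1) * c powr \<beta>"
      by (simp add: powr_add[symmetric] algebra_simps)
    then have "c powr (n+\<beta>+1) = c ^ (n+1) * c powr \<beta>" using e1 by simp
    moreover have "c powr \<beta> \<noteq> 0" using assms by simp
    ultimately show ?thesis by (simp add: add_ac)
  qed
  show ?thesis using has_integral_diff[OF 1 3] e1 e2 by simp
qed

lemma series_integral:
  fixes lam c \<beta> :: real
  assumes lam: "lam > 0" and c: "c > 0" and b: "\<beta> > 0"
  defines "G \<equiv> \<lambda>h. exponential_density (1/lam) h * (if 0 < h \<and> h \<le> c then 1 - (h/c) powr \<beta> else 0)"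
  defines "T \<equiv> \<lambda>n::nat. (1/lam) * (-1/lam)^n / fact n * (c^(n+1)/(n+1) - c^(n+1)/(n+1+\<beta>))"
  shows "T sums (integral {0..c} G)" and "(G has_integral integral {0..c} G) UNIV"
proof -
  define a where "a n = (1/lam)*(-1/lam)^n / fact n" for n :: nat
  define f where "f k h = (\<Sum>n<k. a n * (h powr n - h powr (n+\<beta>)/c powr \<beta>))" for k :: nat and h :: real
  have fi: "(f k has_integral (\<Sum>n<k. T n)) {0..c}" for k
  proof -
    have ti: "((\<lambda>h. a n * (h powr n - h powr (n+\<beta>)/c powr \<beta>)) has_integral T n) {0..c}" for n
      using has_integral_cmult_real[OF term_int[OF c b, of n], of "a n"] by (simp add: T_def a_def)
    show ?thesis unfolding f_def by (intro has_integral_sum finite_lessThan ti)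
  qed
  have conv: "(\<lambda>k. f k h) \<longlonglongrightarrow> G h" if h: "h \<in> {0..c}" for h
  proof (cases "h = 0")
    case True
    then show ?thesis by (simp add: f_def G_def)
  next
    case False
    with h have hp: "h > 0" by simp
    have eq: "f k h = (1/lam) * (\<Sum>n<k. (-h/lam)^n /\<^sub>R fact n) * (1 - (h/c) powr \<beta>)" for k
    proof -
      have "a n * (h powr n - h powr (n+\<beta>)/c powr \<beta>) = (1/lam) * ((-h/lam)^n /\<^sub>R fact n) * (1 - (h/c) powr \<beta>)" for n
      proof -
        have "h powr (n+\<beta>) = h^n * h powr \<beta>" using hp by (simp add: powr_add powr_realpow)
        moreover have "h powr n = h^n" using hp by (simp add: powr_realpow)
        moreover have "(h/c) powr \<beta> = h powr \<beta> / c powr \<beta>" using hp c by (simp add: powr_divide)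
        moreover have "(-1/lam)^n * h^n = (-h/lam)^n" by (simp add: power_mult_distrib[symmetric])
        ultimately show ?thesis unfolding a_def by (simp add: field_simps)
      qed
      then show ?thesis unfolding f_def by (simp add: sum_distrib_left sum_distrib_right)
    qed
    have "(\<lambda>k. (1/lam) * (\<Sum>n<k. (-h/lam)^n /\<^sub>R fact n) * (1 - (h/c) powr \<beta>))
            \<longlonglongrightarrow> (1/lam) * exp (-h/lam) * (1 - (h/c) powr \<beta>)"
      using exp_converges[of "-h/lam"] unfolding sums_def
      by (intro tendsto_intros) auto
    moreover have "G h = (1/lam) * exp (-h/lam) * (1 - (h/c) powr \<beta>)"
      using hp h by (simp add: G_def exponential_density_def)
    ultimately show ?thesis by (simp add: eq)
  qed
  have bound: "norm (f k h) \<le> (1/lam) * exp (c/lam)" if h: "h \<in> {0..c}" for k h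
  proof (cases "h = 0")
    case True
    then show ?thesis using lam by (simp add: f_def)
  next
    case False
    with h have hp: "h > 0" by simp
    have eq: "f k h = (1/lam) * (\<Sum>n<k. (-h/lam)^n /\<^sub>R fact n) * (1 - (h/c) powr \<beta>)"
    proof -
      have "a n * (h powr n - h powr (n+\<beta>)/c powr \<beta>) = (1/lam) * ((-h/lam)^n /\<^sub>R fact n) * (1 - (h/c) powr \<beta>)" for n
      proof -
        have "h powr (n+\<beta>) = h^n * h powr \<beta>" using hp by (simp add: powr_add powr_realpow)
        moreover have "h powr n = h^n" using hp by (simp add: powr_realpow)
        moreover have "(h/c) powr \<beta> = h powr \<beta> / c powr \<beta>" using hp c by (simp add: powr_divide)
        moreover have "(-1/lam)^n * h^n = (-h/lam)^n" by (simp add: power_mult_distrib[symmetric])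
        ultimately show ?thesis unfolding a_def by (simp add: field_simps)
      qed
      then show ?thesis unfolding f_def by (simp add: sum_distrib_left sum_distrib_right)
    qed
    have s1: "\<bar>\<Sum>n<k. (-h/lam)^n /\<^sub>R fact n\<bar> \<le> (\<Sum>n<k. (h/lam)^n /\<^sub>R fact n)"
    proof -
      have "\<bar>\<Sum>n<k. (-h/lam)^n /\<^sub>R fact n\<bar> \<le> (\<Sum>n<k. \<bar>(-h/lam)^n /\<^sub>R fact n\<bar>)"
        by (rule sum_abs)
      also have "\<dots> = (\<Sum>n<k. (h/lam)^n /\<^sub>R fact n)"
        using hp lam by (intro sum.cong refl) (simp add: power_abs abs_mult)
      finally show ?thesis .
    qed
    have s2: "(\<Sum>n<k. (h/lam)^n /\<^sub>R fact n) \<le> exp (h/lam)"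
    proof -
      have "(\<Sum>n<k. (h/lam)^n /\<^sub>R fact n) \<le> (\<Sum>n. (h/lam)^n /\<^sub>R fact n)"
        using hp lam by (intro sum_le_suminf summable_exp_generic) auto
      then show ?thesis by (simp add: exp_def)
    qed
    have s3: "exp (h/lam) \<le> exp (c/lam)" using h lam by (simp add: divide_right_mono)
    have p0: "0 \<le> (h/c) powr \<beta>" by simp
    have p1: "(h/c) powr \<beta> \<le> 1" using h hp c b by (intro powr_le1) auto
    have "norm (f k h) = (1/lam) * \<bar>\<Sum>n<k. (-h/lam)^n /\<^sub>R fact n\<bar> * \<bar>1 - (h/c) powr \<beta>\<bar>"
      using lam by (simp add: eq abs_mult)
    also have "\<dots> \<le> (1/lam) * exp (c/lam) * 1"
    proof -
      have s4: "\<bar>\<Sum>n<k. (-h/lam)^n /\<^sub>R fact n\<bar> \<le> exp (c/lam)" using s1 s2 s3 by linarith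
      have s5: "\<bar>1 - (h/c) powr \<beta>\<bar> \<le> 1" using p0 p1 by linarith
      show ?thesis using lam s4 s5 by (intro mult_mono mult_left_mono) auto
    qed
    finally show ?thesis by simp
  qed
  have dc: "G integrable_on {0..c}" "(\<lambda>k. integral {0..c} (f k)) \<longlonglongrightarrow> integral {0..c} G"
    using dominated_convergence[of f "{0..c}" "\<lambda>_. (1/lam) * exp (c/lam)" G]
      fi bound conv by (auto simp: integrable_on_def)
  have "integral {0..c} (f k) = (\<Sum>n<k. T n)" for k using fi by (rule integral_unique)
  then show "T sums (integral {0..c} G)" using dc(2) by (simp add: sums_def)
  have "(G has_integral integral {0..c} G) {0..c}" using dc(1) by (rule integrable_integral)
  then have "((\<lambda>x. if x \<in> {0..c} then G x else 0) has_integral integral {0..c} G) UNIV"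
    by (subst has_integral_restrict_UNIV)
  moreover have "(\<lambda>x. if x \<in> {0..c} then G x else 0) = G"
    by (auto simp: G_def)
  ultimately show "(G has_integral integral {0..c} G) UNIV" by simp
qed

lemma prob_formula:
  fixes M :: "'a measure" and A :: "complex set"
  assumes fm: "fading_model M lam H Z A"
  shows "emeasure M {\<omega> \<in> space M. gain \<alpha> H Z \<omega> \<le> x} =
    (\<integral>\<^sup>+ h. ennreal (exponential_density (1/lam) h) *
        emeasure (uniform_measure lborel A) {z. h * cmod z powr (-\<alpha>) \<le> x} \<partial>lborel)"
proof -
  interpret prob_space M using fm by (simp add: fading_model_def)
  have dH: "distributed M lborel H (exponential_density (1 / lam))"
    and Zm: "Z \<in> borel_measurable M"
    and dZ: "distr M lborel Z = uniform_measure lborel A"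
    and ind: "indep_var borel (\<lambda>x. complex_of_real (H x)) borel Z" using fm by (auto simp: fading_model_def)
  note dH' = dH[unfolded distributed_def]
  have Hm: "H \<in> borel_measurable M" using dH' by simp
  have eqH: "distr M borel H = density lborel (exponential_density (1 / lam))"
    using dH' by (metis distr_cong sets_lborel)
  have eqZ: "distr M borel Z = uniform_measure lborel A"
    using dZ by (metis distr_cong sets_lborel)
  define S where "S = {p :: complex \<times> complex. Re (fst p) * cmod (snd p) powr (-\<alpha>) \<le> x}"
  have Ssets: "S \<in> sets (borel \<Otimes>\<^sub>M borel)"
  proof -
    have m: "(\<lambda>p::complex\<times>complex. Re (fst p) * cmod (snd p) powr (-\<alpha>)) \<in> borel_measurable (borel \<Otimes>\<^sub>M borel)"
      by measurable
    have "(\<lambda>p::complex\<times>complex. Re (fst p) * cmod (snd p) powr (-\<alpha>)) -` {..x} \<inter> space (borel \<Otimes>\<^sub>M borel) \<in> sets (borel \<Otimes>\<^sub>M borel)"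
      by (rule measurable_sets[OF m]) simp
    then show ?thesis by (simp add: S_def vimage_def space_pair_measure)
  qed
  have J: "distr M borel (\<lambda>x. complex_of_real (H x)) \<Otimes>\<^sub>M distr M borel Z = distr M (borel \<Otimes>\<^sub>M borel) (\<lambda>x. (complex_of_real (H x), Z x))"
    using ind indep_var_distribution_eq by blast
  have HCm: "(\<lambda>x. complex_of_real (H x)) \<in> borel_measurable M" using Hm by measurable
  have "{\<omega> \<in> space M. gain \<alpha> H Z \<omega> \<le> x} = (\<lambda>x. (complex_of_real (H x), Z x)) -` S \<inter> space M"
    by (auto simp: S_def gain_def)
  then have "emeasure M {\<omega> \<in> space M. gain \<alpha> H Z \<omega> \<le> x} = emeasure (distr M (borel \<Otimes>\<^sub>M borel) (\<lambda>x. (complex_of_real (H x), Z x))) S"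
    using HCm Zm Ssets by (subst emeasure_distr) auto
  also have "\<dots> = emeasure (distr M borel (\<lambda>x. complex_of_real (H x)) \<Otimes>\<^sub>M distr M borel Z) S" using J by simp
  also have "\<dots> = (\<integral>\<^sup>+w. emeasure (distr M borel Z) (Pair w -` S) \<partial>distr M borel (\<lambda>x. complex_of_real (H x)))"
  proof -
    interpret Z: prob_space "distr M borel Z" using Zm by (intro prob_space_distr) auto
    show ?thesis using Ssets by (intro Z.emeasure_pair_measure_alt) simp
  qed
  also have "distr M borel (\<lambda>x. complex_of_real (H x)) = distr (distr M borel H) borel complex_of_real"
    using Hm by (subst distr_distr) (auto simp: comp_def)
  also have "(\<integral>\<^sup>+w. emeasure (distr M borel Z) (Pair w -` S) \<partial>distr (distr M borel H) borel complex_of_real)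
      = (\<integral>\<^sup>+h. emeasure (distr M borel Z) (Pair (complex_of_real h) -` S) \<partial>distr M borel H)"
  proof (rule nn_integral_distr)
    show "complex_of_real \<in> measurable (distr M borel H) borel" by simp
    interpret Z: prob_space "distr M borel Z" using Zm by (intro prob_space_distr) auto
    have "(\<lambda>w. emeasure (distr M borel Z) (Pair w -` S)) \<in> borel_measurable borel"
      using Ssets by (intro Z.measurable_emeasure_Pair) simp
    then show "(\<lambda>w. emeasure (distr M borel Z) (Pair w -` S)) \<in> borel_measurable (distr (distr M borel H) borel complex_of_real)"
      by simp
  qed
  also have "\<dots> = (\<integral>\<^sup>+h. emeasure (uniform_measure lborel A) (Pair (complex_of_real h) -` S) \<partial>density lborel (exponential_density (1 / lam)))"
    by (simp add: eqH eqZ)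
  also have "\<dots> = (\<integral>\<^sup>+h. exponential_density (1 / lam) h * emeasure (uniform_measure lborel A) (Pair (complex_of_real h) -` S) \<partial>lborel)"
  proof (rule nn_integral_density)
    show "(\<lambda>x. ennreal (exponential_density (1 / lam) x)) \<in> borel_measurable lborel" by simp
    interpret Z: prob_space "distr M borel Z" using Zm by (intro prob_space_distr) auto
    have "(\<lambda>w. emeasure (distr M borel Z) (Pair w -` S)) \<in> borel_measurable borel"
      using Ssets by (intro Z.measurable_emeasure_Pair) simp
    then have "(\<lambda>h. emeasure (distr M borel Z) (Pair (complex_of_real h) -` S)) \<in> borel_measurable borel"
      by measurable
    then show "(\<lambda>h. emeasure (uniform_measure lborel A) (Pair (complex_of_real h) -` S)) \<in> borel_measurable lborel"
      by (simp add: eqZ)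
  qed
  also have "\<dots> = (\<integral>\<^sup>+ h. ennreal (exponential_density (1/lam) h) *
        emeasure (uniform_measure lborel A) {z. h * cmod z powr (-\<alpha>) \<le> x} \<partial>lborel)"
    by (simp add: S_def vimage_def)
  finally show ?thesis .
qed

lemma ann_emeasure:
  fixes a b :: real
  assumes "0 \<le> a" "a \<le> b"
  shows "emeasure lborel {z::complex. a \<le> cmod z \<and> cmod z \<le> b} = ennreal (pi * (b^2 - a^2))"
proof -
  have e: "{z::complex. a \<le> cmod z \<and> cmod z \<le> b} = cball 0 b - ball 0 a" by (auto simp: dist_norm)
  have fin: "emeasure lborel (ball (0::complex) a) \<noteq> \<infinity>"
    using emeasure_lborel_ball_finite[of "0::complex" a] by (simp add: less_top)
  have d: "emeasure lborel (cball (0::complex) b - ball 0 a) = emeasure lborel (cball (0::complex) b) - emeasure lborel (ball (0::complex) a)"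
    by (rule emeasure_Diff[OF fin]) (use assms in auto)
  have "emeasure lborel (cball (0::complex) b) = ennreal (unit_ball_vol (DIM(complex)) * b ^ DIM(complex))"
    by (rule emeasure_cball) (use assms in simp)
  then have c1: "emeasure lborel (cball (0::complex) b) = ennreal (pi * b^2)"
    by (simp only: DIM_complex unit_ball_vol_2 of_nat_numeral)
  have "emeasure lborel (ball (0::complex) a) = ennreal (unit_ball_vol (DIM(complex)) * a ^ DIM(complex))"
    by (rule emeasure_ball) (use assms in simp)
  then have c2: "emeasure lborel (ball (0::complex) a) = ennreal (pi * a^2)"
    by (simp only: DIM_complex unit_ball_vol_2 of_nat_numeral)
  have "ennreal (pi * b^2) - ennreal (pi * a^2) = ennreal (pi * b^2 - pi * a^2)"
    by (rule ennreal_minus) simp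
  also have "pi * b^2 - pi * a^2 = pi * (b^2 - a^2)" by (simp add: right_diff_distrib)
  finally show ?thesis using e d c1 c2 by simp
qed

lemma powr_le_iff_base:
  fixes p u v :: real
  assumes "0 < p" "0 \<le> u" "0 \<le> v"
  shows "u powr p \<le> v powr p \<longleftrightarrow> u \<le> v"
  using assms by (meson linorder_not_le powr_less_mono2 powr_mono2 less_imp_le)

lemma slice_mem:
  fixes \<alpha> h x :: real and z :: complex
  assumes "\<alpha> > 0" "h > 0" "x > 0" "z \<noteq> 0"
  shows "h * cmod z powr (-\<alpha>) \<le> x \<longleftrightarrow> (h/x) powr (1/\<alpha>) \<le> cmod z"
proof -
  have zp: "cmod z > 0" using assms by simp
  have "h * cmod z powr (-\<alpha>) \<le> x \<longleftrightarrow> h / x \<le> cmod z powr \<alpha>"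
    using assms zp by (simp add: powr_minus field_simps)
  also have "\<dots> \<longleftrightarrow> (h/x) powr (1/\<alpha>) \<le> (cmod z powr \<alpha>) powr (1/\<alpha>)"
    using assms zp by (intro powr_le_iff_base[symmetric]) auto
  also have "(cmod z powr \<alpha>) powr (1/\<alpha>) = cmod z" using assms zp by (simp add: powr_powr)
  finally show ?thesis .
qed

lemma slice_zero:
  fixes \<alpha> h :: real and z :: complex
  assumes "\<alpha> > 0" "h > 0"
  shows "h * cmod z powr (-\<alpha>) \<le> 0 \<longleftrightarrow> z = 0"
proof
  assume a: "h * cmod z powr (-\<alpha>) \<le> 0"
  show "z = 0"
  proof (rule ccontr)
    assume "z \<noteq> 0"
    then have "h * cmod z powr (-\<alpha>) > 0" using assms by simp
    with a show False by simp
  qed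
qed simp

lemma T_minus0_pos:
  fixes \<alpha> h x :: real
  assumes "\<alpha> > 0" "h > 0" "x > 0"
  shows "{z::complex. h * cmod z powr (-\<alpha>) \<le> x} - {0} = {z. (h/x) powr (1/\<alpha>) \<le> cmod z}"
proof -
  have sp: "(h/x) powr (1/\<alpha>) > 0" using assms by simp
  show ?thesis
  proof (intro set_eqI iffI)
    fix z :: complex assume "z \<in> {z::complex. h * cmod z powr (-\<alpha>) \<le> x} - {0}"
    then have "z \<noteq> 0" "h * cmod z powr (-\<alpha>) \<le> x" by auto
    then show "z \<in> {z. (h/x) powr (1/\<alpha>) \<le> cmod z}" using slice_mem[OF assms] by blast
  next
    fix z :: complex assume "z \<in> {z. (h/x) powr (1/\<alpha>) \<le> cmod z}"
    then have a: "(h/x) powr (1/\<alpha>) \<le> cmod z" by simp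
    then have "z \<noteq> 0" using sp by auto
    then show "z \<in> {z::complex. h * cmod z powr (-\<alpha>) \<le> x} - {0}" using slice_mem[OF assms] a by blast
  qed
qed

lemma T_minus0_zero:
  fixes \<alpha> h :: real
  assumes "\<alpha> > 0" "h > 0"
  shows "{z::complex. h * cmod z powr (-\<alpha>) \<le> 0} - {0} = {}"
  using slice_zero[OF assms] by auto

lemma s_le_iff:
  fixes \<alpha> h x R :: real
  assumes "\<alpha> > 0" "h > 0" "x > 0" "R > 0"
  shows "(h/x) powr (1/\<alpha>) \<le> R \<longleftrightarrow> h \<le> x * R powr \<alpha>"
proof -
  have "(h/x) powr (1/\<alpha>) \<le> R \<longleftrightarrow> ((h/x) powr (1/\<alpha>)) powr \<alpha> \<le> R powr \<alpha>"
    using assms by (intro powr_le_iff_base[symmetric]) auto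
  also have "((h/x) powr (1/\<alpha>)) powr \<alpha> = h/x" using assms by (simp add: powr_powr)
  finally show ?thesis using assms by (simp add: field_simps)
qed

lemma s_sq:
  fixes \<alpha> h x R :: real
  assumes "\<alpha> > 0" "h > 0" "x > 0" "R > 0"
  shows "((h/x) powr (1/\<alpha>))^2 = R^2 * (h/(x * R powr \<alpha>)) powr (2/\<alpha>)"
proof -
  have "((h/x) powr (1/\<alpha>))^2 = (h/x) powr (2/\<alpha>)"
    using assms by (simp add: powr_powr[symmetric] powr_realpow[symmetric] powr_powr)
  also have "(h/(x * R powr \<alpha>)) powr (2/\<alpha>) = (h/x) powr (2/\<alpha>) / (R powr \<alpha>) powr (2/\<alpha>)"
    using assms by (simp add: powr_divide[symmetric] divide_divide_eq_left)
  moreover have "(R powr \<alpha>) powr (2/\<alpha>) = R^2" using assms by (simp add: powr_powr powr_realpow)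
  ultimately show ?thesis using assms by simp
qed

lemma null0: "{0::complex} \<in> null_sets lborel"
  by (rule finite_imp_null_set_lborel) simp

lemma Tsets: "{z::complex. h * cmod z powr (-\<alpha>) \<le> x} \<in> sets lborel"
proof -
  have m: "(\<lambda>z::complex. h * cmod z powr (-\<alpha>)) \<in> borel_measurable borel"
  proof -
    have n: "(\<lambda>z::complex. cmod z) \<in> borel_measurable borel" by (intro borel_measurable_norm measurable_ident_sets refl)
    have "(\<lambda>z::complex. cmod z powr (-\<alpha>)) \<in> borel_measurable borel"
      by (rule powr_real_measurable[OF n]) simp
    then show ?thesis by (intro borel_measurable_times) simp_all
  qed
  have "(\<lambda>z::complex. h * cmod z powr (-\<alpha>)) -` {..x} \<inter> space borel \<in> sets borel"
    by (rule measurable_sets[OF m]) (simp only: atMost_borel)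
  then show ?thesis by (simp only: vimage_def atMost_iff space_borel Int_UNIV_right sets_lborel)
qed

lemma q_le1:
  fixes \<alpha> h c :: real
  assumes "\<alpha> > 0" "h > 0" "h \<le> c"
  shows "0 \<le> 1 - (h/c) powr (2/\<alpha>)"
proof -
  have "(h/c) powr (2/\<alpha>) \<le> 1" using assms by (intro powr_le1) auto
  then show ?thesis by simp
qed

lemma slice_near:
  fixes \<alpha> R x h :: real
  assumes a: "\<alpha> > 0" and R: "R > 0" and x: "x \<ge> 0" and h: "h > 0"
  shows "emeasure (uniform_measure lborel {z::complex. cmod z \<le> R}) {z. h * cmod z powr (-\<alpha>) \<le> x}
     = ennreal (if h \<le> x * R powr \<alpha> then 1 - (h/(x * R powr \<alpha>)) powr (2/\<alpha>) else 0)"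
proof -
  define A where "A = {z::complex. cmod z \<le> R}"
  define T where "T = {z::complex. h * cmod z powr (-\<alpha>) \<le> x}"
  have Asets: "A \<in> sets lborel" unfolding A_def by measurable
  have Tsets': "T \<in> sets lborel" unfolding T_def by (rule Tsets)
  have mA: "emeasure lborel A = ennreal (pi * R^2)"
    using ann_emeasure[of 0 R] R unfolding A_def by simp
  have "emeasure (uniform_measure lborel A) T = emeasure lborel (A \<inter> T) / emeasure lborel A"
    using Asets Tsets' by simp
  also have "emeasure lborel (A \<inter> T) = emeasure lborel (A \<inter> T - {0})"
    by (rule emeasure_Diff_null_set[symmetric]) (use null0 Asets Tsets' in auto)
  also have "\<dots> = ennreal (if h \<le> x * R powr \<alpha> then pi*R^2 * (1 - (h/(x*R powr \<alpha>)) powr (2/\<alpha>)) else 0)"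
  proof (cases "x = 0")
    case True
    have "T - {0} = {}" using T_minus0_zero[OF a h] True unfolding T_def by simp
    then have "A \<inter> T - {0} = {}" by blast
    then have e: "emeasure lborel (A \<inter> T - {0}) = 0" by (metis emeasure_empty)
    moreover have "\<not> h \<le> x * R powr \<alpha>" using True h by simp
    ultimately show ?thesis by simp
  next
    case False
    then have xp: "x > 0" using x by simp
    define s where "s = (h/x) powr (1/\<alpha>)"
    have sp: "s > 0" using h xp by (simp add: s_def)
    have "A \<inter> T - {0} = A \<inter> (T - {0})" by blast
    also have "T - {0} = {z. s \<le> cmod z}" using T_minus0_pos[OF a h xp] unfolding T_def s_def .
    finally have AT: "A \<inter> T - {0} = {z. s \<le> cmod z \<and> cmod z \<le> R}" unfolding A_def by auto
    show ?thesis
    proof (cases "h \<le> x * R powr \<alpha>")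
      case True
      then have "s \<le> R" using s_le_iff[OF a h xp R] s_def by simp
      then have "emeasure lborel (A \<inter> T - {0}) = ennreal (pi * (R^2 - s^2))" using AT ann_emeasure[of s R] sp by simp
      moreover have "s^2 = R^2 * (h/(x * R powr \<alpha>)) powr (2/\<alpha>)" using s_sq[OF a h xp R] s_def by simp
      ultimately show ?thesis using True by (simp add: algebra_simps)
    next
      case False
      then have "R < s" using s_le_iff[OF a h xp R] s_def by simp
      then have "A \<inter> T - {0} = {}" using AT by auto
      then have e: "emeasure lborel (A \<inter> T - {0}) = 0" by (metis emeasure_empty)
      then show ?thesis using False by simp
    qed
  qed
  finally have eq: "emeasure (uniform_measure lborel A) T =
     ennreal (if h \<le> x * R powr \<alpha> then pi*R^2 * (1 - (h/(x*R powr \<alpha>)) powr (2/\<alpha>)) else 0) / ennreal (pi * R^2)"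
    using mA by simp
  have pp: "pi * R^2 > 0" using R by simp
  show ?thesis
  proof (cases "h \<le> x * R powr \<alpha>")
    case True
    have "0 \<le> 1 - (h/(x*R powr \<alpha>)) powr (2/\<alpha>)" using q_le1[OF a h True] .
    then show ?thesis using True eq pp R unfolding A_def T_def
      by (simp add: divide_ennreal)
  next
    case False
    then show ?thesis using eq unfolding A_def T_def by simp
  qed
qed

lemma slice_far:
  fixes \<alpha> R1 R2 x h :: real
  assumes a: "\<alpha> > 0" and R1: "R1 > 0" and R12: "R1 < R2" and x: "x \<ge> 0" and h: "h > 0"
  shows "emeasure (uniform_measure lborel {z::complex. R1 \<le> cmod z \<and> cmod z \<le> R2}) {z. h * cmod z powr (-\<alpha>) \<le> x}
     = ennreal ((R2^2 * (if h \<le> x * R2 powr \<alpha> then 1 - (h/(x * R2 powr \<alpha>)) powr (2/\<alpha>) else 0)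
               - R1^2 * (if h \<le> x * R1 powr \<alpha> then 1 - (h/(x * R1 powr \<alpha>)) powr (2/\<alpha>) else 0)) / (R2^2 - R1^2))
      \<and> 0 \<le> R2^2 * (if h \<le> x * R2 powr \<alpha> then 1 - (h/(x * R2 powr \<alpha>)) powr (2/\<alpha>) else 0)
               - R1^2 * (if h \<le> x * R1 powr \<alpha> then 1 - (h/(x * R1 powr \<alpha>)) powr (2/\<alpha>) else 0)"
    (is "_ = ennreal (?V / _) \<and> _")
proof -
  define A where "A = {z::complex. R1 \<le> cmod z \<and> cmod z \<le> R2}"
  define T where "T = {z::complex. h * cmod z powr (-\<alpha>) \<le> x}"
  have R2: "R2 > 0" using R1 R12 by simp
  have Asets: "A \<in> sets lborel" unfolding A_def by measurable
  have Tsets': "T \<in> sets lborel" unfolding T_def by (rule Tsets)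
  have sq: "R1^2 < R2^2" using R1 R12 by (intro power_strict_mono) auto
  have mA: "emeasure lborel A = ennreal (pi * (R2^2 - R1^2))"
    using ann_emeasure[of R1 R2] R1 R12 unfolding A_def by simp
  have "emeasure (uniform_measure lborel A) T = emeasure lborel (A \<inter> T) / emeasure lborel A"
    using Asets Tsets' by simp
  also have "emeasure lborel (A \<inter> T) = emeasure lborel (A \<inter> T - {0})"
    by (rule emeasure_Diff_null_set[symmetric]) (use null0 Asets Tsets' in auto)
  finally have eq0: "emeasure (uniform_measure lborel A) T = emeasure lborel (A \<inter> T - {0}) / emeasure lborel A" .
  have key: "emeasure lborel (A \<inter> T - {0}) = ennreal (pi * ?V) \<and> 0 \<le> ?V"
  proof (cases "x = 0")
    case True
    have "T - {0} = {}" using T_minus0_zero[OF a h] True unfolding T_def by simp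
    then have "A \<inter> T - {0} = {}" by blast
    then have e: "emeasure lborel (A \<inter> T - {0}) = 0" by (metis emeasure_empty)
    moreover have "\<not> h \<le> x * R1 powr \<alpha>" "\<not> h \<le> x * R2 powr \<alpha>" using True h by simp_all
    ultimately show ?thesis by simp
  next
    case False
    then have xp: "x > 0" using x by simp
    define s where "s = (h/x) powr (1/\<alpha>)"
    have sp: "s > 0" using h xp by (simp add: s_def)
    have "A \<inter> T - {0} = A \<inter> (T - {0})" by blast
    also have "T - {0} = {z. s \<le> cmod z}" using T_minus0_pos[OF a h xp] unfolding T_def s_def .
    finally have AT: "A \<inter> T - {0} = {z. max s R1 \<le> cmod z \<and> cmod z \<le> R2}" unfolding A_def by auto
    have q1: "R1^2 * (1 - (h/(x * R1 powr \<alpha>)) powr (2/\<alpha>)) = R1^2 - s^2"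
      using s_sq[OF a h xp R1] s_def by (simp add: algebra_simps)
    have q2: "R2^2 * (1 - (h/(x * R2 powr \<alpha>)) powr (2/\<alpha>)) = R2^2 - s^2"
      using s_sq[OF a h xp R2] s_def by (simp add: algebra_simps)
    have i1: "s \<le> R1 \<longleftrightarrow> h \<le> x * R1 powr \<alpha>" using s_le_iff[OF a h xp R1] s_def by simp
    have i2: "s \<le> R2 \<longleftrightarrow> h \<le> x * R2 powr \<alpha>" using s_le_iff[OF a h xp R2] s_def by simp
    consider "s \<le> R1" | "R1 < s" "s \<le> R2" | "R2 < s" by linarith
    then show ?thesis
    proof cases
      case 1
      then have "max s R1 = R1" by simp
      then have "emeasure lborel (A \<inter> T - {0}) = ennreal (pi * (R2^2 - R1^2))"
        using AT ann_emeasure[of R1 R2] R1 R12 by simp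
      moreover have "?V = R2^2 - R1^2" using 1 i1 i2 q1 q2 R12 by simp
      ultimately show ?thesis using sq by simp
    next
      case 2
      then have "max s R1 = s" by simp
      then have "emeasure lborel (A \<inter> T - {0}) = ennreal (pi * (R2^2 - s^2))"
        using AT ann_emeasure[of s R2] sp 2 by simp
      moreover have "?V = R2^2 - s^2" using 2 i1 i2 q1 q2 by simp
      moreover have "s^2 \<le> R2^2" using 2 sp by (intro power_mono) auto
      ultimately show ?thesis by simp
    next
      case 3
      then have "A \<inter> T - {0} = {}" using AT by auto
      then have e: "emeasure lborel (A \<inter> T - {0}) = 0" by (metis emeasure_empty)
      moreover have "?V = 0" using 3 i1 i2 R12 by simp
      ultimately show ?thesis by simp
    qed
  qed
  have eq: "emeasure (uniform_measure lborel A) T = ennreal (pi * ?V) / ennreal (pi * (R2^2 - R1^2))"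
    and V0: "0 \<le> ?V"
    using eq0 key mA by simp_all
  have pp: "pi * (R2^2 - R1^2) > 0" using sq by simp
  have "ennreal (pi * ?V) / ennreal (pi * (R2^2 - R1^2)) = ennreal (pi * ?V / (pi * (R2^2 - R1^2)))"
    using V0 pp by (intro divide_ennreal) auto
  also have "pi * ?V / (pi * (R2^2 - R1^2)) = ?V / (R2^2 - R1^2)" by simp
  finally show ?thesis using eq V0 unfolding A_def T_def by simp
qed

lemma poch_ratio:
  fixes b :: real assumes "b > 0"
  shows "pochhammer b n / pochhammer (b+1) n = b / (b + n)"
proof -
  have "pochhammer b n * (b + n) = b * pochhammer (b+1) n"
    using pochhammer_Suc[of b n] pochhammer_rec[of b n] by simp
  moreover have "pochhammer (b+1) n > 0" using assms by (intro pochhammer_pos) simp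
  moreover have "b + n > 0" using assms by simp
  ultimately show ?thesis by (simp add: field_simps)
qed

lemma poch2: "pochhammer (2::real) n = fact (Suc n)"
proof -
  have "fact (Suc n) = pochhammer (1::real) (Suc n)" by (rule pochhammer_fact)
  also have "\<dots> = pochhammer 2 n" by (simp add: pochhammer_rec)
  finally show ?thesis by simp
qed

lemma hyp_match:
  fixes \<alpha> lam R x I :: real
  assumes a: "\<alpha> > 0" and lam: "lam > 0" and R: "R > 0" and x: "x > 0"
  assumes sums: "(\<lambda>n::nat. (1/lam) * (-1/lam)^n / fact n * ((x * R powr \<alpha>)^(n+1)/(n+1) - (x * R powr \<alpha>)^(n+1)/(n+1+2/\<alpha>))) sums I"
  shows "I = 2 * lam powr (2/\<alpha>) / (\<alpha> * R^2) * (R powr \<alpha> / lam) powr (2/\<alpha>+1) / (2/\<alpha>+1) * x * hypergeom [2/\<alpha>+1, 1] [2/\<alpha>+1+1, 2] (- (R powr \<alpha> / lam) * x)"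
proof -
  define \<beta> where "\<beta> = 2/\<alpha>"
  define b3 where "b3 = \<beta> + 1"
  define c where "c = x * R powr \<alpha>"
  define w where "w = R powr \<alpha> / lam * x"
  have bp: "\<beta> > 0" using a by (simp add: \<beta>_def)
  have b3p: "b3 > 0" using bp by (simp add: b3_def)
  have cw: "c = lam * w" using lam by (simp add: c_def w_def)
  have wp: "w > 0" using lam R x by (simp add: w_def)
  define K where "K = 2 * lam powr \<beta> / (\<alpha> * R^2) * (R powr \<alpha> / lam) powr b3 / b3 * x"
  have KK: "K * b3 = \<beta> * w"
  proof -
    have "(R powr \<alpha> / lam) powr b3 = (R powr \<alpha>) powr b3 / lam powr b3"
      using R lam by (simp add: powr_divide)
    also have "(R powr \<alpha>) powr b3 = R powr (\<alpha> * \<beta> + \<alpha>)"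
      using R by (simp add: powr_powr b3_def algebra_simps)
    also have "\<alpha> * \<beta> + \<alpha> = 2 + \<alpha>" using a by (simp add: \<beta>_def)
    also have "R powr (2 + \<alpha>) = R^2 * R powr \<alpha>" using R by (simp add: powr_add powr_realpow)
    also have "lam powr b3 = lam powr \<beta> * lam" using lam by (simp add: b3_def powr_add)
    finally have e: "(R powr \<alpha> / lam) powr b3 = R^2 * R powr \<alpha> / (lam powr \<beta> * lam)" .
    have "K * b3 = 2 * lam powr \<beta> / (\<alpha> * R^2) * (R^2 * R powr \<alpha> / (lam powr \<beta> * lam)) * x"
      unfolding K_def e using b3p by simp
    also have "\<dots> = (2/\<alpha>) * (R powr \<alpha> / lam * x)"
      using a R lam by (simp add: field_simps)
    finally show ?thesis by (simp add: \<beta>_def w_def)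
  qed
  have Kp: "K \<noteq> 0" using KK bp wp b3p by auto
  define ht where "ht n = (prod_list (map (\<lambda>a. pochhammer a n) [b3, 1]) / prod_list (map (\<lambda>b. pochhammer b n) [b3 + 1, 2]))
          * (- (R powr \<alpha> / lam) * x) ^ n / fact n" for n :: nat
  have ht_eq: "ht n = b3 / (b3 + n) * (-w)^n / fact (Suc n)" for n
  proof -
    have "ht n = (pochhammer b3 n / pochhammer (b3+1) n) * (fact n / fact (Suc n)) * (-w)^n / fact n"
      unfolding ht_def w_def by (simp add: poch2 pochhammer_fact[symmetric])
    also have "\<dots> = b3 / (b3 + n) * (-w)^n / fact (Suc n)"
      using b3p by (simp add: poch_ratio)
    finally show ?thesis .
  qed
  have T_eq: "(1/lam) * (-1/lam)^n / fact n * (c^(n+1)/(n+1) - c^(n+1)/(n+1+\<beta>)) = K * ht n" for n :: nat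
  proof -
    have d: "c^(n+1)/(n+1) - c^(n+1)/(n+1+\<beta>) = c^(n+1) * \<beta> / ((n+1)*(n+1+\<beta>))"
      using bp by (simp add: field_simps)
    have p: "(1/lam) * (-1/lam)^n * c^(n+1) = w * (-w)^n"
    proof -
      have "(1/lam) * (-1/lam)^n * c^(n+1) = ((1/lam) * c) * ((-1/lam) * c)^n"
        by (simp only: power_mult_distrib power_add power_one_right mult_ac)
      also have "(1/lam) * c = w" using lam cw by simp
      also have "(-1/lam) * c = -w" using lam cw by simp
      finally show ?thesis .
    qed
    have f: "fact (Suc n) = (n+1) * (fact n :: real)" by simp
    have "(1/lam) * (-1/lam)^n / fact n * (c^(n+1)/(n+1) - c^(n+1)/(n+1+\<beta>))
        = ((1/lam) * (-1/lam)^n * c^(n+1)) * \<beta> / (fact n * (n+1) * (n+1+\<beta>))"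
      using d bp by (simp add: field_simps)
    also have "\<dots> = \<beta> * w * (-w)^n / (fact (Suc n) * (b3 + n))"
      using p f by (simp add: b3_def algebra_simps)
    also have "\<dots> = (K * b3) * (-w)^n / (fact (Suc n) * (b3 + n))" using KK by simp
    also have "\<dots> = K * ht n" using b3p by (simp add: ht_eq field_simps)
    finally show ?thesis .
  qed
  have "(\<lambda>n. K * ht n) sums I" using sums T_eq unfolding c_def \<beta>_def by simp
  then have "(\<lambda>n. K * ht n / K) sums (I / K)" by (rule sums_divide)
  then have "ht sums (I / K)" using Kp by simp
  then have "hypergeom [b3, 1] [b3 + 1, 2] (- (R powr \<alpha> / lam) * x) = I / K"
    unfolding hypergeom_def ht_def by (rule sums_unique[symmetric])
  then have "I = K * hypergeom [b3, 1] [b3 + 1, 2] (- (R powr \<alpha> / lam) * x)" using Kp by simp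
  then show ?thesis unfolding K_def b3_def \<beta>_def by simp
qed

definition Gf :: "real \<Rightarrow> real \<Rightarrow> real \<Rightarrow> real \<Rightarrow> real" where
  "Gf lam c \<beta> h = exponential_density (1/lam) h * (if 0 < h \<and> h \<le> c then 1 - (h/c) powr \<beta> else 0)"

lemma Gf_meas: "Gf lam c \<beta> \<in> borel_measurable borel"
  unfolding Gf_def[abs_def] by measurable

lemma ed_nonneg: "lam > 0 \<Longrightarrow> 0 \<le> exponential_density (1/lam) h"
  by (simp add: exponential_density_def)

lemma Gf_nonneg:
  assumes "lam > 0" "\<beta> > 0"
  shows "0 \<le> Gf lam c \<beta> h"
proof (cases "0 < h \<and> h \<le> c")
  case True
  then have "(h/c) powr \<beta> \<le> 1" using assms by (intro powr_le1) auto
  then show ?thesis using True ed_nonneg[OF assms(1)] by (simp add: Gf_def)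
next
  case False
  then show ?thesis unfolding Gf_def by auto
qed

lemma Gf_zero: "h \<le> 0 \<Longrightarrow> Gf lam c \<beta> h = 0"
  by (simp add: Gf_def)

lemma near_emeasure:
  fixes M :: "'a measure"
  assumes fm: "fading_model M lam H Z {z. cmod z \<le> R}"
    and a: "\<alpha> > 0" and R: "R > 0" and x: "x \<ge> 0" and lam: "lam > 0"
  shows "emeasure M {\<omega> \<in> space M. gain \<alpha> H Z \<omega> \<le> x} = (\<integral>\<^sup>+h. ennreal (Gf lam (x * R powr \<alpha>) (2/\<alpha>) h) \<partial>lborel)"
proof -
  have "emeasure M {\<omega> \<in> space M. gain \<alpha> H Z \<omega> \<le> x} =
    (\<integral>\<^sup>+ h. ennreal (exponential_density (1/lam) h) *
        emeasure (uniform_measure lborel {z. cmod z \<le> R}) {z. h * cmod z powr (-\<alpha>) \<le> x} \<partial>lborel)"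
    by (rule prob_formula[OF fm])
  also have "\<dots> = (\<integral>\<^sup>+h. ennreal (Gf lam (x * R powr \<alpha>) (2/\<alpha>) h) \<partial>lborel)"
  proof (rule nn_integral_cong_AE)
    show "AE h in lborel. ennreal (exponential_density (1/lam) h) *
        emeasure (uniform_measure lborel {z. cmod z \<le> R}) {z. h * cmod z powr (-\<alpha>) \<le> x}
        = ennreal (Gf lam (x * R powr \<alpha>) (2/\<alpha>) h)"
      using AE_lborel_singleton[of "0::real"]
    proof eventually_elim
      case (elim h)
      show ?case
      proof (cases "h > 0")
        case True
        have "ennreal (exponential_density (1/lam) h) *
            emeasure (uniform_measure lborel {z. cmod z \<le> R}) {z. h * cmod z powr (-\<alpha>) \<le> x}
          = ennreal (exponential_density (1/lam) h) * ennreal (if h \<le> x * R powr \<alpha> then 1 - (h/(x * R powr \<alpha>)) powr (2/\<alpha>) else 0)"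
          by (simp only: slice_near[OF a R x True])
        also have "\<dots> = ennreal (exponential_density (1/lam) h * (if h \<le> x * R powr \<alpha> then 1 - (h/(x * R powr \<alpha>)) powr (2/\<alpha>) else 0))"
          by (rule ennreal_mult'[symmetric]) (rule ed_nonneg[OF lam])
        also have "\<dots> = ennreal (Gf lam (x * R powr \<alpha>) (2/\<alpha>) h)"
          using True by (simp add: Gf_def)
        finally show ?thesis .
      next
        case False
        with elim have "h < 0" by simp
        then show ?thesis by (simp add: Gf_def exponential_density_def)
      qed
    qed
  qed
  finally show ?thesis .
qed

lemma near_measure:
  fixes M :: "'a measure"
  assumes fm: "fading_model M lam H Z {z. cmod z \<le> R}"
    and a: "\<alpha> > 0" and R: "R > 0" and x: "x > 0" and lam: "lam > 0"
  shows "measure M {\<omega> \<in> space M. gain \<alpha> H Z \<omega> \<le> x} = 2 * lam powr (2/\<alpha>) / (\<alpha> * R^2) * (R powr \<alpha> / lam) powr (2/\<alpha>+1) / (2/\<alpha>+1) * x * hypergeom [2/\<alpha>+1, 1] [2/\<alpha>+1+1, 2] (- (R powr \<alpha> / lam) * x)"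
proof -
  define c where "c = x * R powr \<alpha>"
  have cp: "c > 0" using x R by (simp add: c_def)
  have bp: "2/\<alpha> > 0" using a by simp
  have Geq: "(\<lambda>h. exponential_density (1/lam) h * (if 0 < h \<and> h \<le> c then 1 - (h/c) powr (2/\<alpha>) else 0)) = Gf lam c (2/\<alpha>)"
    by (rule ext) (simp add: Gf_def)
  note si = series_integral[OF lam cp bp, unfolded Geq]
  define I where "I = integral {0..c} (Gf lam c (2/\<alpha>))"
  have hi: "(Gf lam c (2/\<alpha>) has_integral I) UNIV" using si(2) unfolding I_def .
  have I0: "0 \<le> I" using has_integral_nonneg[OF hi] Gf_nonneg[OF lam bp] by simp
  have "emeasure M {\<omega> \<in> space M. gain \<alpha> H Z \<omega> \<le> x} = (\<integral>\<^sup>+h. ennreal (Gf lam c (2/\<alpha>) h) \<partial>lborel)"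
    using near_emeasure[OF fm a R _ lam, of x] x by (simp add: c_def)
  also have "\<dots> = ennreal I"
    by (rule nn_integral_has_integral_lborel[OF Gf_meas Gf_nonneg[OF lam bp] hi])
  finally have "measure M {\<omega> \<in> space M. gain \<alpha> H Z \<omega> \<le> x} = I"
    using I0 by (simp add: measure_def)
  moreover have "I = 2 * lam powr (2/\<alpha>) / (\<alpha> * R^2) * (R powr \<alpha> / lam) powr (2/\<alpha>+1) / (2/\<alpha>+1) * x * hypergeom [2/\<alpha>+1, 1] [2/\<alpha>+1+1, 2] (- (R powr \<alpha> / lam) * x)"
    by (rule hyp_match[OF a lam R x]) (use si(1) in \<open>simp add: I_def c_def\<close>)
  ultimately show ?thesis by simp
qed

lemma near_zero:
  fixes M :: "'a measure"
  assumes fm: "fading_model M lam H Z {z. cmod z \<le> R}"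
    and a: "\<alpha> > 0" and R: "R > 0" and lam: "lam > 0"
  shows "measure M {\<omega> \<in> space M. gain \<alpha> H Z \<omega> \<le> 0} = 0"
proof -
  have "emeasure M {\<omega> \<in> space M. gain \<alpha> H Z \<omega> \<le> 0} = (\<integral>\<^sup>+h. ennreal (Gf lam (0 * R powr \<alpha>) (2/\<alpha>) h) \<partial>lborel)"
    using near_emeasure[OF fm a R _ lam, of 0] by simp
  also have "\<dots> = 0"
  proof -
    have "Gf lam (0 * R powr \<alpha>) (2/\<alpha>) h = 0" for h unfolding Gf_def by auto
    then show ?thesis by simp
  qed
  finally show ?thesis by (simp add: measure_def)
qed

lemma Gf_closed:
  assumes a: "\<alpha> > 0" and R: "R > 0" and x: "x > 0" and lam: "lam > 0"
  shows "(Gf lam (x * R powr \<alpha>) (2/\<alpha>) has_integral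
     (2 * lam powr (2/\<alpha>) / (\<alpha> * R^2) * (R powr \<alpha> / lam) powr (2/\<alpha>+1) / (2/\<alpha>+1) * x * hypergeom [2/\<alpha>+1, 1] [2/\<alpha>+1+1, 2] (- (R powr \<alpha> / lam) * x))) UNIV"
proof -
  define c where "c = x * R powr \<alpha>"
  have cp: "c > 0" using x R by (simp add: c_def)
  have bp: "2/\<alpha> > 0" using a by simp
  have Geq: "(\<lambda>h. exponential_density (1/lam) h * (if 0 < h \<and> h \<le> c then 1 - (h/c) powr (2/\<alpha>) else 0)) = Gf lam c (2/\<alpha>)"
    by (rule ext) (simp add: Gf_def)
  note si = series_integral[OF lam cp bp, unfolded Geq]
  define I where "I = integral {0..c} (Gf lam c (2/\<alpha>))"
  have hi: "(Gf lam c (2/\<alpha>) has_integral I) UNIV" using si(2) unfolding I_def .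
  moreover have "I = 2 * lam powr (2/\<alpha>) / (\<alpha> * R^2) * (R powr \<alpha> / lam) powr (2/\<alpha>+1) / (2/\<alpha>+1) * x * hypergeom [2/\<alpha>+1, 1] [2/\<alpha>+1+1, 2] (- (R powr \<alpha> / lam) * x)"
    by (rule hyp_match[OF a lam R x]) (use si(1) in \<open>simp add: I_def c_def\<close>)
  ultimately show ?thesis by (simp add: c_def)
qed

definition Ff :: "real \<Rightarrow> real \<Rightarrow> real \<Rightarrow> real \<Rightarrow> real \<Rightarrow> real \<Rightarrow> real" where
  "Ff lam x \<alpha> R1 R2 h = (R2^2 * Gf lam (x * R2 powr \<alpha>) (2/\<alpha>) h - R1^2 * Gf lam (x * R1 powr \<alpha>) (2/\<alpha>) h) / (R2^2 - R1^2)"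

lemma Gf_pos: "h > 0 \<Longrightarrow> Gf lam c \<beta> h = exponential_density (1/lam) h * (if h \<le> c then 1 - (h/c) powr \<beta> else 0)"
  unfolding Gf_def by simp

lemma far_pointwise:
  assumes a: "\<alpha> > 0" and R1: "R1 > 0" and R12: "R1 < R2" and x: "x \<ge> 0" and lam: "lam > 0"
  shows "0 \<le> Ff lam x \<alpha> R1 R2 h"
    and "h \<noteq> 0 \<Longrightarrow> ennreal (exponential_density (1/lam) h) *
        emeasure (uniform_measure lborel {z. R1 \<le> cmod z \<and> cmod z \<le> R2}) {z. h * cmod z powr (-\<alpha>) \<le> x}
        = ennreal (Ff lam x \<alpha> R1 R2 h)"
proof -
  have sq: "R1^2 < R2^2" using R1 R12 by (intro power_strict_mono) auto
  have "0 \<le> Ff lam x \<alpha> R1 R2 h \<and> (h \<noteq> 0 \<longrightarrow> ennreal (exponential_density (1/lam) h) *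
        emeasure (uniform_measure lborel {z. R1 \<le> cmod z \<and> cmod z \<le> R2}) {z. h * cmod z powr (-\<alpha>) \<le> x}
        = ennreal (Ff lam x \<alpha> R1 R2 h))"
  proof (cases "h > 0")
    case True
    note sf = slice_far[OF a R1 R12 x True]
    define V where "V = R2^2 * (if h \<le> x * R2 powr \<alpha> then 1 - (h/(x * R2 powr \<alpha>)) powr (2/\<alpha>) else 0)
               - R1^2 * (if h \<le> x * R1 powr \<alpha> then 1 - (h/(x * R1 powr \<alpha>)) powr (2/\<alpha>) else 0)"
    have V0: "0 \<le> V" using sf unfolding V_def by simp
    have em: "emeasure (uniform_measure lborel {z. R1 \<le> cmod z \<and> cmod z \<le> R2}) {z. h * cmod z powr (-\<alpha>) \<le> x} = ennreal (V / (R2^2 - R1^2))"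
      using sf unfolding V_def by simp
    have Fe: "Ff lam x \<alpha> R1 R2 h = exponential_density (1/lam) h * (V / (R2^2 - R1^2))"
      unfolding Ff_def V_def using True by (simp add: Gf_pos algebra_simps diff_divide_distrib)
    have ed: "0 \<le> exponential_density (1/lam) h" by (rule ed_nonneg[OF lam])
    have "0 \<le> Ff lam x \<alpha> R1 R2 h" unfolding Fe using ed V0 sq by simp
    moreover have "ennreal (exponential_density (1/lam) h) * ennreal (V / (R2^2 - R1^2)) = ennreal (Ff lam x \<alpha> R1 R2 h)"
      unfolding Fe by (rule ennreal_mult'[symmetric]) (rule ed)
    ultimately show ?thesis using em by simp
  next
    case False
    then have "Ff lam x \<alpha> R1 R2 h = 0" by (simp add: Ff_def Gf_zero)
    moreover have "h < 0 \<Longrightarrow> exponential_density (1/lam) h = 0" by (simp add: exponential_density_def)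
    ultimately show ?thesis using False by auto
  qed
  then show "0 \<le> Ff lam x \<alpha> R1 R2 h"
    and "h \<noteq> 0 \<Longrightarrow> ennreal (exponential_density (1/lam) h) *
        emeasure (uniform_measure lborel {z. R1 \<le> cmod z \<and> cmod z \<le> R2}) {z. h * cmod z powr (-\<alpha>) \<le> x}
        = ennreal (Ff lam x \<alpha> R1 R2 h)" by auto
qed

lemma far_emeasure:
  fixes M :: "'a measure"
  assumes fm: "fading_model M lam H Z {z. R1 \<le> cmod z \<and> cmod z \<le> R2}"
    and a: "\<alpha> > 0" and R1: "R1 > 0" and R12: "R1 < R2" and x: "x \<ge> 0" and lam: "lam > 0"
  shows "emeasure M {\<omega> \<in> space M. gain \<alpha> H Z \<omega> \<le> x} = (\<integral>\<^sup>+h. ennreal (Ff lam x \<alpha> R1 R2 h) \<partial>lborel)"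
proof -
  have "emeasure M {\<omega> \<in> space M. gain \<alpha> H Z \<omega> \<le> x} =
    (\<integral>\<^sup>+ h. ennreal (exponential_density (1/lam) h) *
        emeasure (uniform_measure lborel {z. R1 \<le> cmod z \<and> cmod z \<le> R2}) {z. h * cmod z powr (-\<alpha>) \<le> x} \<partial>lborel)"
    by (rule prob_formula[OF fm])
  also have "\<dots> = (\<integral>\<^sup>+h. ennreal (Ff lam x \<alpha> R1 R2 h) \<partial>lborel)"
  proof (rule nn_integral_cong_AE)
    show "AE h in lborel. ennreal (exponential_density (1/lam) h) *
        emeasure (uniform_measure lborel {z. R1 \<le> cmod z \<and> cmod z \<le> R2}) {z. h * cmod z powr (-\<alpha>) \<le> x}
        = ennreal (Ff lam x \<alpha> R1 R2 h)"
      using AE_lborel_singleton[of "0::real"]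
    proof eventually_elim
      case (elim h)
      then show ?case by (rule far_pointwise(2)[OF a R1 R12 x lam])
    qed
  qed
  finally show ?thesis .
qed

lemma Ff_meas: "Ff lam x \<alpha> R1 R2 \<in> borel_measurable borel"
proof -
  have "(\<lambda>h. (R2^2 * Gf lam (x * R2 powr \<alpha>) (2/\<alpha>) h - R1^2 * Gf lam (x * R1 powr \<alpha>) (2/\<alpha>) h) / (R2^2 - R1^2)) \<in> borel_measurable borel"
    using Gf_meas[of lam "x * R2 powr \<alpha>" "2/\<alpha>"] Gf_meas[of lam "x * R1 powr \<alpha>" "2/\<alpha>"] by measurable
  then show ?thesis by (simp add: Ff_def[abs_def])
qed

lemma far_measure:
  fixes M :: "'a measure"
  assumes fm: "fading_model M lam H Z {z. R1 \<le> cmod z \<and> cmod z \<le> R2}"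
    and a: "\<alpha> > 0" and R1: "R1 > 0" and R12: "R1 < R2" and x: "x > 0" and lam: "lam > 0"
  shows "measure M {\<omega> \<in> space M. gain \<alpha> H Z \<omega> \<le> x} =
      (R2^2 * (2 * lam powr (2/\<alpha>) / (\<alpha> * R2^2) * (R2 powr \<alpha> / lam) powr (2/\<alpha>+1) / (2/\<alpha>+1) * x * hypergeom [2/\<alpha>+1, 1] [2/\<alpha>+1+1, 2] (- (R2 powr \<alpha> / lam) * x))
     - R1^2 * (2 * lam powr (2/\<alpha>) / (\<alpha> * R1^2) * (R1 powr \<alpha> / lam) powr (2/\<alpha>+1) / (2/\<alpha>+1) * x * hypergeom [2/\<alpha>+1, 1] [2/\<alpha>+1+1, 2] (- (R1 powr \<alpha> / lam) * x)))
     / (R2^2 - R1^2)"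
    (is "_ = (R2^2 * ?I2 - R1^2 * ?I1) / (R2^2 - R1^2)")
proof -
  have R2: "R2 > 0" using R1 R12 by simp
  have h2: "(Gf lam (x * R2 powr \<alpha>) (2/\<alpha>) has_integral ?I2) UNIV" by (rule Gf_closed[OF a R2 x lam])
  have h1: "(Gf lam (x * R1 powr \<alpha>) (2/\<alpha>) has_integral ?I1) UNIV" by (rule Gf_closed[OF a R1 x lam])
  have hi: "(Ff lam x \<alpha> R1 R2 has_integral ((R2^2 * ?I2 - R1^2 * ?I1) / (R2^2 - R1^2))) UNIV"
    unfolding Ff_def[abs_def]
    by (intro has_integral_divide has_integral_diff has_integral_cmult_real h1 h2)
  have nn: "\<And>h. 0 \<le> Ff lam x \<alpha> R1 R2 h" using far_pointwise(1)[OF a R1 R12 _ lam] x by simp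
  have I0: "0 \<le> (R2^2 * ?I2 - R1^2 * ?I1) / (R2^2 - R1^2)" using has_integral_nonneg[OF hi] nn by simp
  have "emeasure M {\<omega> \<in> space M. gain \<alpha> H Z \<omega> \<le> x} = (\<integral>\<^sup>+h. ennreal (Ff lam x \<alpha> R1 R2 h) \<partial>lborel)"
    using far_emeasure[OF fm a R1 R12 _ lam, of x] x by simp
  also have "\<dots> = ennreal ((R2^2 * ?I2 - R1^2 * ?I1) / (R2^2 - R1^2))"
    by (rule nn_integral_has_integral_lborel[OF Ff_meas nn hi])
  finally show ?thesis using I0 by (simp add: measure_def)
qed

lemma far_zero:
  fixes M :: "'a measure"
  assumes fm: "fading_model M lam H Z {z. R1 \<le> cmod z \<and> cmod z \<le> R2}"
    and a: "\<alpha> > 0" and R1: "R1 > 0" and R12: "R1 < R2" and lam: "lam > 0"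
  shows "measure M {\<omega> \<in> space M. gain \<alpha> H Z \<omega> \<le> 0} = 0"
proof -
  have "emeasure M {\<omega> \<in> space M. gain \<alpha> H Z \<omega> \<le> 0} = (\<integral>\<^sup>+h. ennreal (Ff lam 0 \<alpha> R1 R2 h) \<partial>lborel)"
    using far_emeasure[OF fm a R1 R12 _ lam, of 0] by simp
  also have "\<dots> = 0"
  proof -
    have "Gf lam (0 * R powr \<alpha>) (2/\<alpha>) h = 0" for h R unfolding Gf_def by auto
    then have "Ff lam 0 \<alpha> R1 R2 h = 0" for h unfolding Ff_def by simp
    then show ?thesis by simp
  qed
  finally show ?thesis by (simp add: measure_def)
qed

theorem corollary1:
  fixes \<alpha> R1 R2 lamG :: real
  assumes "\<alpha> > 0" and "0 < R1" and "R1 < R2" and "lamG > 0"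
  defines "b3 \<equiv> 2 / \<alpha> + 1"
      and "b11 \<equiv> 2 * lamG powr (2 / \<alpha>) / (\<alpha> * R1\<^sup>2)"
      and "b12 \<equiv> 2 * lamG powr (2 / \<alpha>) / (\<alpha> * (R2\<^sup>2 - R1\<^sup>2))"
      and "b21 \<equiv> R1 powr \<alpha> / lamG"
      and "b22 \<equiv> R2 powr \<alpha> / lamG"
  shows
    "(\<forall>(M :: 'a measure) H Z x.
        fading_model M lamG H Z {z. cmod z \<le> R1} \<and> 0 \<le> x \<longrightarrow>
        measure M {\<omega> \<in> space M. gain \<alpha> H Z \<omega> \<le> x}
          = b11 * b21 powr b3 / b3 * x * hypergeom [b3, 1] [b3 + 1, 2] (- b21 * x))
     \<and>
     (\<forall>(M :: 'a measure) H Z x.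
        fading_model M lamG H Z {z. R1 \<le> cmod z \<and> cmod z \<le> R2} \<and> 0 \<le> x \<longrightarrow>
        measure M {\<omega> \<in> space M. gain \<alpha> H Z \<omega> \<le> x}
          = b12 * b22 powr b3 / b3 * x * hypergeom [b3, 1] [b3 + 1, 2] (- b22 * x)
            - b12 * b21 powr b3 / b3 * x * hypergeom [b3, 1] [b3 + 1, 2] (- b21 * x))"
proof (intro conjI allI impI)
  fix M :: "'a measure" and H Z and x :: real
  assume hyp: "fading_model M lamG H Z {z. cmod z \<le> R1} \<and> 0 \<le> x"
  then have fm: "fading_model M lamG H Z {z. cmod z \<le> R1}" and x0: "0 \<le> x" by auto
  show "measure M {\<omega> \<in> space M. gain \<alpha> H Z \<omega> \<le> x}
          = b11 * b21 powr b3 / b3 * x * hypergeom [b3, 1] [b3 + 1, 2] (- b21 * x)"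
  proof (cases "x = 0")
    case True
    then show ?thesis using near_zero[OF fm assms(1) assms(2) assms(4)] by simp
  next
    case False
    with x0 have xp: "x > 0" by simp
    show ?thesis using near_measure[OF fm assms(1) assms(2) xp assms(4)]
      unfolding b11_def b21_def b3_def by simp
  qed
next
  fix M :: "'a measure" and H Z and x :: real
  assume hyp: "fading_model M lamG H Z {z. R1 \<le> cmod z \<and> cmod z \<le> R2} \<and> 0 \<le> x"
  then have fm: "fading_model M lamG H Z {z. R1 \<le> cmod z \<and> cmod z \<le> R2}" and x0: "0 \<le> x" by auto
  show "measure M {\<omega> \<in> space M. gain \<alpha> H Z \<omega> \<le> x}
          = b12 * b22 powr b3 / b3 * x * hypergeom [b3, 1] [b3 + 1, 2] (- b22 * x)
            - b12 * b21 powr b3 / b3 * x * hypergeom [b3, 1] [b3 + 1, 2] (- b21 * x)"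
  proof (cases "x = 0")
    case True
    then show ?thesis using far_zero[OF fm assms(1) assms(2) assms(3) assms(4)] by simp
  next
    case False
    with x0 have xp: "x > 0" by simp
    have sq: "R1^2 < R2^2" using assms(2,3) by (intro power_strict_mono) auto
    have R1n: "R1 \<noteq> 0" and R2n: "R2 \<noteq> 0" and an: "\<alpha> \<noteq> 0" and Dn: "R2^2 - R1^2 \<noteq> 0"
      using assms sq by auto
    have alg2: "(R2^2 * (K / (\<alpha> * R2^2) * A2 / b * y * h2) - R1^2 * (K / (\<alpha> * R1^2) * A1 / b * y * h1)) / (R2^2 - R1^2)
        = K / (\<alpha> * (R2^2 - R1^2)) * A2 / b * y * h2 - K / (\<alpha> * (R2^2 - R1^2)) * A1 / b * y * h1"
      for K A1 A2 b y h1 h2 :: real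
    proof -
      have e2: "R2^2 * (K / (\<alpha> * R2^2) * A2 / b * y * h2) = K / \<alpha> * (A2 / b * y * h2)" using R2n by simp
      have e1: "R1^2 * (K / (\<alpha> * R1^2) * A1 / b * y * h1) = K / \<alpha> * (A1 / b * y * h1)" using R1n by simp
      have e3: "(K / \<alpha> * P) / (R2^2 - R1^2) = K / (\<alpha> * (R2^2 - R1^2)) * P" for P
        using an Dn by simp
      show ?thesis unfolding e1 e2 diff_divide_distrib e3 by (simp add: mult.assoc)
    qed
    note m = far_measure[OF fm assms(1) assms(2) assms(3) xp assms(4)]
    show ?thesis unfolding b12_def b21_def b22_def b3_def
      by (rule trans[OF m alg2])
  qed
qed

end
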